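(* The Lie subalgebra $\Lambda_1(\mathbb{Q}\mathrm{Tree}_2)=\bigoplus_{m\ge2}\mathbb{Q}\mathrm{Tree}_2((m))$ of $\Lambda(\mathbb{Q}\mathrm{Tree}_2^-)$ is not finitely generated.
   Context: $\mathrm{Tree}_2((m))$, $m\ge1$, is the set of planar binary rooted trees with one root and $m$ leaves labeled $1,\dots,m$ from left to right, equivalently full parenthesizations of $12\cdots m$; $\mathrm{Tree}_2((1))=\{1\}$. Composition $S\circ_iT$ grafts the root of $T$ onto the $i$-th leaf of $S$. The operad $\mathrm{Tree}_2^-$ has $\mathrm{Tree}_2^-((0))=\{\circ\}$, $\mathrm{Tree}_2^-((m))=\mathrm{Tree}_2((m))$ for $m\ge1$, and $c\circ_i\circ=\partial_ic$, where $\partial_ic$ erases the $i$-th leaf of $c$ (and $\partial_1 1=\circ$). For a nonsymmetric operad of sets $\mathcal{C}$, $\Lambda(\mathbb{Q}\mathcal{C})=\bigoplus_{m\ge0}\mathbb{Q}\mathcal{C}((m))$ with bracket $[c,d]=\sum_{t=1}^{j}d\circ_tc-\sum_{s=1}^{k}c\circ_sd$ for $c\in\mathcal{C}((k))$, $d\in\mathcal{C}((j))$. *)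

theory Defs
  imports Complex_Main "HOL-Library.Poly_Mapping"
begin

text \<open>Planar binary rooted trees (full parenthesizations); Leaf is the tree 1
with one leaf. Leaves are numbered 1..m from left to right.\<close>
datatype tree = Leaf | Node tree tree

fun leaves :: "tree \<Rightarrow> nat" where
  "leaves Leaf = 1"
| "leaves (Node l r) = leaves l + leaves r"

text \<open>graft S i T = S \<circ>_i T: graft the root of T onto the i-th leaf of S (1 \<le> i \<le> leaves S).\<close>
fun graft :: "tree \<Rightarrow> nat \<Rightarrow> tree \<Rightarrow> tree" where
  "graft Leaf i T = (if i = 1 then T else Leaf)"
| "graft (Node l r) i T =
     (if i \<le> leaves l then Node (graft l i T) r else Node l (graft r (i - leaves l) T))"

type_synonym vec = "tree \<Rightarrow>\<^sub>0 rat"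

definition smul :: "rat \<Rightarrow> vec \<Rightarrow> vec" where
  "smul a x = Poly_Mapping.map (\<lambda>v. a * v) x"

definition br_basis :: "tree \<Rightarrow> tree \<Rightarrow> vec" where
  "br_basis c d =
     (\<Sum>t\<in>{1..leaves d}. Poly_Mapping.single (graft d t c) 1)
   - (\<Sum>s\<in>{1..leaves c}. Poly_Mapping.single (graft c s d) 1)"

definition lie_br :: "vec \<Rightarrow> vec \<Rightarrow> vec" where
  "lie_br x y = (\<Sum>c\<in>Poly_Mapping.keys x. \<Sum>d\<in>Poly_Mapping.keys y.
      smul (Poly_Mapping.lookup x c * Poly_Mapping.lookup y d) (br_basis c d))"

definition Lambda1 :: "vec set" where
  "Lambda1 = {x. \<forall>c\<in>Poly_Mapping.keys x. 2 \<le> leaves c}"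

inductive_set lie_gen :: "vec set \<Rightarrow> vec set" for S :: "vec set" where
  gen: "x \<in> S \<Longrightarrow> x \<in> lie_gen S"
| zero: "0 \<in> lie_gen S"
| add: "x \<in> lie_gen S \<Longrightarrow> y \<in> lie_gen S \<Longrightarrow> x + y \<in> lie_gen S"
| smul: "x \<in> lie_gen S \<Longrightarrow> smul a x \<in> lie_gen S"
| bracket: "x \<in> lie_gen S \<Longrightarrow> y \<in> lie_gen S \<Longrightarrow> lie_br x y \<in> lie_gen S"

end

theory Submission
  imports Defs
begin

fun lc :: "tree \<Rightarrow> bool" where
  "lc Leaf = True"
| "lc (Node l r) = (lc l \<and> r = Leaf)"

lemma leaves_pos: "leaves t \<ge> 1"
  by (induction t) auto

lemma leaves_graft: "1 \<le> i \<Longrightarrow> i \<le> leaves d \<Longrightarrow> leaves (graft d i c) = leaves d + leaves c - 1"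
  by (induction d arbitrary: i) (auto simp: leaves_pos)

lemma graft_ne_Leaf: "2 \<le> leaves c \<Longrightarrow> 1 \<le> i \<Longrightarrow> i \<le> leaves d \<Longrightarrow> graft d i c \<noteq> Leaf"
  by (induction d arbitrary: i) auto

lemma lc_graft: "2 \<le> leaves c \<Longrightarrow> 1 \<le> i \<Longrightarrow> i \<le> leaves d \<Longrightarrow>
   lc (graft d i c) \<longleftrightarrow> (i = 1 \<and> lc d \<and> lc c)"
proof (induction d arbitrary: i)
  case Leaf then show ?case by auto
next
  case (Node l r)
  show ?case
  proof (cases "i \<le> leaves l")
    case True
    then show ?thesis using Node by auto
  next
    case False
    have "i - leaves l \<ge> 1" "i - leaves l \<le> leaves r" using False Node.prems by auto
    then have "graft r (i - leaves l) c \<noteq> Leaf" using graft_ne_Leaf Node.prems by blast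
    moreover have "i \<noteq> 1" using False leaves_pos[of l] by auto
    ultimately show ?thesis using False by auto
  qed
qed

lemma lc_unique: "lc a \<Longrightarrow> lc b \<Longrightarrow> leaves a = leaves b \<Longrightarrow> a = b"
proof (induction a arbitrary: b)
  case Leaf then show ?case
    by (cases b) (auto, metis add_le_same_cancel1 leaves_pos not_one_le_zero)
next
  case (Node l r)
  then show ?case
  proof (cases b)
    case Leaf then show ?thesis using Node leaves_pos[of l] by auto
  next
    case (Node l' r')
    then show ?thesis using Node.prems Node.IH by auto
  qed
qed

lemma sum_single_lookup:
  "Poly_Mapping.lookup (\<Sum>t\<in>A. Poly_Mapping.single (f t) (1::rat)) u = (\<Sum>t\<in>A. if f t = u then 1 else 0)"
  unfolding Poly_Mapping.lookup_sum by (rule sum.cong) (auto simp: Poly_Mapping.lookup_single when_def)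

lemma br_basis_lc:
  assumes c: "2 \<le> leaves c" and d: "2 \<le> leaves d" and u: "lc u"
  shows "Poly_Mapping.lookup (br_basis c d) u = 0"
proof -
  have A: "(\<Sum>t\<in>{1..leaves d}. if graft d t c = u then (1::rat) else 0)
         = (if graft d 1 c = u \<and> lc c \<and> lc d then 1 else 0)"
  proof -
    have "(\<Sum>t\<in>{1..leaves d}. if graft d t c = u then (1::rat) else 0)
        = (\<Sum>t\<in>{1..leaves d}. if t = 1 then (if graft d 1 c = u \<and> lc c \<and> lc d then 1 else 0) else 0)"
    proof (rule sum.cong[OF refl])
      fix t assume t: "t \<in> {1..leaves d}"
      show "(if graft d t c = u then (1::rat) else 0) = (if t = 1 then (if graft d 1 c = u \<and> lc c \<and> lc d then 1 else 0) else 0)"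
        using lc_graft[OF c, of t d] t u by auto
    qed
    also have "\<dots> = (if graft d 1 c = u \<and> lc c \<and> lc d then 1 else 0)"
      using d by (simp add: sum.delta)
    finally show ?thesis .
  qed
  have B: "(\<Sum>t\<in>{1..leaves c}. if graft c t d = u then (1::rat) else 0)
         = (if graft c 1 d = u \<and> lc c \<and> lc d then 1 else 0)"
  proof -
    have "(\<Sum>t\<in>{1..leaves c}. if graft c t d = u then (1::rat) else 0)
        = (\<Sum>t\<in>{1..leaves c}. if t = 1 then (if graft c 1 d = u \<and> lc c \<and> lc d then 1 else 0) else 0)"
    proof (rule sum.cong[OF refl])
      fix t assume t: "t \<in> {1..leaves c}"
      show "(if graft c t d = u then (1::rat) else 0) = (if t = 1 then (if graft c 1 d = u \<and> lc c \<and> lc d then 1 else 0) else 0)"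
        using lc_graft[OF d, of t c] t u by auto
    qed
    also have "\<dots> = (if graft c 1 d = u \<and> lc c \<and> lc d then 1 else 0)"
      using c by (simp add: sum.delta)
    finally show ?thesis .
  qed
  have C: "lc c \<Longrightarrow> lc d \<Longrightarrow> graft d 1 c = graft c 1 d"
    apply (rule lc_unique)
    using lc_graft[OF c, of 1 d] lc_graft[OF d, of 1 c] c d leaves_graft[of 1 d c] leaves_graft[of 1 c d]
    by auto
  show ?thesis
    unfolding br_basis_def lookup_minus sum_single_lookup A B using C by auto
qed

lemma lookup_smul: "Poly_Mapping.lookup (smul a x) k = a * Poly_Mapping.lookup x k"
  unfolding smul_def by transfer (simp add: when_def)

lemma lambda1_iff: "x \<in> Lambda1 \<longleftrightarrow> Poly_Mapping.lookup x Leaf = 0"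
proof
  assume "x \<in> Lambda1"
  then have "Leaf \<notin> Poly_Mapping.keys x" unfolding Lambda1_def by fastforce
  then show "Poly_Mapping.lookup x Leaf = 0" by (simp add: Poly_Mapping.in_keys_iff)
next
  assume h: "Poly_Mapping.lookup x Leaf = 0"
  { fix c assume "c \<in> Poly_Mapping.keys x"
    then have "c \<noteq> Leaf" using h by (auto simp: Poly_Mapping.in_keys_iff)
    then have "2 \<le> leaves c" proof (cases c)
      case (Node l r) then show ?thesis using leaves_pos[of l] leaves_pos[of r] by simp
    qed simp }
  then show "x \<in> Lambda1" unfolding Lambda1_def by auto
qed

lemma lie_br_lc:
  assumes "x \<in> Lambda1" "y \<in> Lambda1" "lc u"
  shows "Poly_Mapping.lookup (lie_br x y) u = 0"
  unfolding lie_br_def lookup_sum lookup_smul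
  using assms br_basis_lc unfolding Lambda1_def by (auto intro!: sum.neutral)

fun lcomb :: "nat \<Rightarrow> tree" where
  "lcomb 0 = Node Leaf Leaf"
| "lcomb (Suc n) = Node (lcomb n) Leaf"

lemma lcomb_props: "lc (lcomb n) \<and> leaves (lcomb n) = n + 2"
  by (induction n) auto

theorem corollary5p3:
  shows "\<not> (\<exists>S. finite S \<and> S \<subseteq> Lambda1 \<and> lie_gen S = Lambda1)"
proof
  assume "\<exists>S. finite S \<and> S \<subseteq> Lambda1 \<and> lie_gen S = Lambda1"
  then obtain S where fS: "finite S" and SL: "S \<subseteq> Lambda1" and eq: "lie_gen S = Lambda1" by blast
  define K where "K = (\<Union>x\<in>S. Poly_Mapping.keys x)"
  have fK: "finite K" unfolding K_def using fS by auto
  define u where "u = lcomb (Max (insert 0 (leaves ` K)))"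
  have ulc: "lc u" and ul: "leaves u = Max (insert 0 (leaves ` K)) + 2"
    unfolding u_def using lcomb_props by auto
  have uK: "u \<notin> K"
  proof
    assume "u \<in> K"
    then have "leaves u \<le> Max (insert 0 (leaves ` K))" using fK by auto
    then show False using ul by auto
  qed
  have inv: "x \<in> Lambda1 \<and> Poly_Mapping.lookup x u = 0" if "x \<in> lie_gen S" for x
    using that
  proof (induction rule: lie_gen.induct)
    case (gen x)
    then show ?case using SL uK unfolding K_def by (auto simp: Poly_Mapping.in_keys_iff)
  next
    case zero then show ?case by (simp add: lambda1_iff)
  next
    case (add x y) then show ?case by (simp add: lambda1_iff lookup_add)
  next
    case (smul x a) then show ?case by (simp add: lambda1_iff lookup_smul)
  next
    case (bracket x y) then show ?case
      using lie_br_lc[of x y u] lie_br_lc[of x y Leaf] ulc by (simp add: lambda1_iff)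
  qed
  have "u \<noteq> Leaf" using ul by auto
  then have "Poly_Mapping.single u (1::rat) \<in> Lambda1" by (simp add: lambda1_iff lookup_single)
  then have "Poly_Mapping.single u (1::rat) \<in> lie_gen S" using eq by simp
  from inv[OF this] show False by simp
qed

end
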